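(* Let $(\Gamma,M)$ be an E-GCM graph on $n\ge3$ nodes whose underlying graph $\Gamma$ is a loop (the nodes can be numbered $\gamma_1,\dots,\gamma_n$ so that each $\gamma_i$ is adjacent exactly to $\gamma_{i-1}$ and $\gamma_{i+1}$, indices mod $n$), and such that $M_{ij}M_{ji}=1$ for every pair of adjacent nodes. Then $(\Gamma,M)$ is not admissible.
   Context: E-GCM $M=(M_{ij})_{i,j\in I_n}$: real, $M_{ii}=2$, $M_{ij}\le0$ ($i\ne j$), $M_{ij}\ne0\iff M_{ji}\ne0$, nonzero $M_{ij}M_{ji}$ either $\ge4$ or $=4\cos^2(\pi/m)$ with $m\ge3$ integer; E-GCM graph: nodes $\gamma_i$, adjacent iff $M_{ij}\ne0$. Positions $\lambda\in\mathbb{R}^n$; firing $\gamma_i$ (allowed iff $\lambda_i>0$) replaces $\lambda_j$ by $\lambda_j-M_{ij}\lambda_i$. Numbers game: fire nodes with positive population while any exist; a game sequence is convergent if finite. A connected E-GCM graph is admissible if some nonzero position with all $\lambda_i\ge0$ has a convergent game sequence. *)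

theory Defs
  imports Complex_Main
begin

text \<open>Nodes are indexed by 0..<n; the matrix is M :: nat => nat => real, and a
position is lam :: nat => real (only values at indices < n matter).\<close>

definition is_egcm :: "nat \<Rightarrow> (nat \<Rightarrow> nat \<Rightarrow> real) \<Rightarrow> bool" where
  "is_egcm n M \<longleftrightarrow>
     (\<forall>i<n. M i i = 2) \<and>
     (\<forall>i<n. \<forall>j<n. i \<noteq> j \<longrightarrow> M i j \<le> 0) \<and>
     (\<forall>i<n. \<forall>j<n. M i j \<noteq> 0 \<longleftrightarrow> M j i \<noteq> 0) \<and>
     (\<forall>i<n. \<forall>j<n. i \<noteq> j \<longrightarrow> M i j * M j i \<noteq> 0 \<longrightarrow>
        (M i j * M j i \<ge> 4 \<or>
         (\<exists>m::nat. m \<ge> 3 \<and> M i j * M j i = 4 * (cos (pi / real m))\<^sup>2)))"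

definition egcm_adj :: "nat \<Rightarrow> (nat \<Rightarrow> nat \<Rightarrow> real) \<Rightarrow> nat \<Rightarrow> nat \<Rightarrow> bool" where
  "egcm_adj n M i j \<longleftrightarrow> i < n \<and> j < n \<and> i \<noteq> j \<and> M i j \<noteq> 0"

definition fire :: "nat \<Rightarrow> (nat \<Rightarrow> nat \<Rightarrow> real) \<Rightarrow> nat \<Rightarrow> (nat \<Rightarrow> real) \<Rightarrow> (nat \<Rightarrow> real)" where
  "fire n M i lam = (\<lambda>j. if j < n then lam j - M i j * lam i else lam j)"

fun play :: "nat \<Rightarrow> (nat \<Rightarrow> nat \<Rightarrow> real) \<Rightarrow> (nat \<Rightarrow> real) \<Rightarrow> nat list \<Rightarrow> (nat \<Rightarrow> real)" where
  "play n M lam [] = lam"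
| "play n M lam (i # is) = play n M (fire n M i lam) is"

fun legal_seq :: "nat \<Rightarrow> (nat \<Rightarrow> nat \<Rightarrow> real) \<Rightarrow> (nat \<Rightarrow> real) \<Rightarrow> nat list \<Rightarrow> bool" where
  "legal_seq n M lam [] = True"
| "legal_seq n M lam (i # is) = (i < n \<and> lam i > 0 \<and> legal_seq n M (fire n M i lam) is)"

definition convergent_game_seq :: "nat \<Rightarrow> (nat \<Rightarrow> nat \<Rightarrow> real) \<Rightarrow> (nat \<Rightarrow> real) \<Rightarrow> nat list \<Rightarrow> bool" where
  "convergent_game_seq n M lam s \<longleftrightarrow>
     legal_seq n M lam s \<and> (\<forall>j<n. play n M lam s j \<le> 0)"

definition admissible :: "nat \<Rightarrow> (nat \<Rightarrow> nat \<Rightarrow> real) \<Rightarrow> bool" where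
  "admissible n M \<longleftrightarrow>
     (\<exists>lam. (\<forall>i<n. lam i \<ge> 0) \<and> (\<exists>i<n. lam i \<noteq> 0) \<and>
            (\<exists>s. convergent_game_seq n M lam s))"

end

theory Submission
  imports Defs
begin

lemma fire_sum:
  assumes "i < n"
  shows "(\<Sum>j<n. v j * fire n M i lam j) = (\<Sum>j<n. v j * lam j) - lam i * (\<Sum>j<n. M i j * v j)"
  by (simp add: fire_def algebra_simps sum_subtractf sum_distrib_left)

lemma play_mono:
  assumes vpos: "\<forall>i<n. (\<Sum>j<n. M i j * v j) \<le> 0"
  shows "legal_seq n M lam s \<Longrightarrow> (\<Sum>j<n. v j * lam j) \<le> (\<Sum>j<n. v j * play n M lam s j)"
proof (induction s arbitrary: lam)
  case Nil
  then show ?case by simp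
next
  case (Cons i s)
  then have i: "i < n" "lam i > 0" "legal_seq n M (fire n M i lam) s" by auto
  have "(\<Sum>j<n. v j * lam j) \<le> (\<Sum>j<n. v j * fire n M i lam j)"
    using fire_sum[OF i(1)] vpos i(1,2)
    by (simp add: mult_nonneg_nonpos)
  also have "\<dots> \<le> (\<Sum>j<n. v j * play n M (fire n M i lam) s j)"
    using Cons.IH[OF i(3)] .
  finally show ?case by simp
qed

lemma not_adm_crit:
  assumes vp: "\<forall>i<n. v i > 0" and vn: "\<forall>i<n. (\<Sum>j<n. M i j * v j) \<le> 0"
  shows "\<not> admissible n M"
proof
  assume "admissible n M"
  then obtain lam s i0 where l0: "\<forall>i<n. lam i \<ge> 0" and i0: "i0 < n" "lam i0 \<noteq> 0"
    and c: "convergent_game_seq n M lam s" unfolding admissible_def by blast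
  have "0 < v i0 * lam i0" using vp l0 i0 by (simp add: less_le)
  also have "\<dots> \<le> (\<Sum>j<n. v j * lam j)"
    using i0 vp l0 by (intro member_le_sum) auto
  also have "\<dots> \<le> (\<Sum>j<n. v j * play n M lam s j)"
    using play_mono[OF vn] c unfolding convergent_game_seq_def by blast
  also have "\<dots> \<le> 0"
    using c vp unfolding convergent_game_seq_def
    by (intro sum_nonpos) (simp add: mult_nonneg_nonpos less_imp_le)
  finally show False by simp
qed

theorem lemma4p14:
  fixes n :: nat and M :: "nat \<Rightarrow> nat \<Rightarrow> real"
  assumes "is_egcm n M"
    and "n \<ge> 3"
    and "\<exists>\<sigma>. bij_betw \<sigma> {..<n} {..<n} \<and>
           (\<forall>i<n. \<forall>j<n. egcm_adj n M (\<sigma> i) (\<sigma> j) \<longleftrightarrow>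
                        (j = Suc i mod n \<or> i = Suc j mod n))"
    and "\<forall>i j. egcm_adj n M i j \<longrightarrow> M i j * M j i = 1"
  shows "\<not> admissible n M"
proof -
  obtain \<sigma> where bij: "bij_betw \<sigma> {..<n} {..<n}" and
    adj: "\<And>i j. i<n \<Longrightarrow> j<n \<Longrightarrow> egcm_adj n M (\<sigma> i) (\<sigma> j) \<longleftrightarrow> (j = Suc i mod n \<or> i = Suc j mod n)"
    using assms(3) by blast
  have n3: "n \<ge> 3" by fact
  have inj: "inj_on \<sigma> {..<n}" using bij bij_betw_imp_inj_on by blast
  have sig: "\<And>k. k < n \<Longrightarrow> \<sigma> k < n" using bij bij_betwE by blast
  have diag: "\<And>i. i < n \<Longrightarrow> M i i = 2" and neg: "\<And>i j. i<n \<Longrightarrow> j<n \<Longrightarrow> i \<noteq> j \<Longrightarrow> M i j \<le> 0"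
    using assms(1) unfolding is_egcm_def by auto
  define c where "c p = - M (\<sigma> p) (\<sigma> (Suc p mod n))" for p
  have edge: "c p > 0 \<and> M (\<sigma> (Suc p mod n)) (\<sigma> p) = - 1 / c p" if "p < n" for p
  proof -
    let ?q = "Suc p mod n"
    have q: "?q < n" using that by simp
    have a: "egcm_adj n M (\<sigma> p) (\<sigma> ?q)" using adj[OF that q] by simp
    then have ne: "\<sigma> p \<noteq> \<sigma> ?q" "M (\<sigma> p) (\<sigma> ?q) \<noteq> 0" unfolding egcm_adj_def by auto
    have le: "M (\<sigma> p) (\<sigma> ?q) \<le> 0" using neg sig that q ne by auto
    have pr: "M (\<sigma> p) (\<sigma> ?q) * M (\<sigma> ?q) (\<sigma> p) = 1" using assms(4) a by blast
    have "c p > 0" using le ne unfolding c_def by simp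
    moreover have "M (\<sigma> ?q) (\<sigma> p) = - 1 / c p" using pr ne unfolding c_def
      by (simp add: field_simps)
    ultimately show ?thesis by simp
  qed
  define P where "P = prod c {..<n}"
  have Ppos: "P > 0" unfolding P_def using edge by (intro prod_pos) auto
  define r where "r = root n P"
  have rpos: "r > 0" using Ppos n3 unfolding r_def by simp
  have rn: "r ^ n = P" using Ppos n3 unfolding r_def by simp
  define w where "w k = r ^ k / prod c {..<k}" for k
  have wpos: "w k > 0" if "k \<le> n" for k
    unfolding w_def using rpos edge that by (intro divide_pos_pos prod_pos) auto
  have rel: "w (Suc p mod n) * c p = r * w p" if "p < n" for p
  proof (cases "Suc p < n")
    case True
    have "c p > 0" using edge that by auto
    then show ?thesis using True unfolding w_def by (simp add: field_simps)
  next
    case False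
    then have pn: "Suc p = n" using that by simp
    have "c p > 0" using edge that by auto
    moreover have "prod c {..<p} > 0" using edge that by (intro prod_pos) auto
    moreover have "r * r ^ p = P" using rn pn by (metis power_Suc)
    moreover have "P = prod c {..<p} * c p" unfolding P_def using pn
      by (metis lessThan_Suc prod.insert finite_lessThan lessThan_iff less_irrefl mult.commute)
    moreover have "\<forall>a\<in>{..<p}. c a \<noteq> 0" using edge that by (metis lessThan_iff less_trans order_less_irrefl)
    ultimately show ?thesis using pn unfolding w_def by (simp add: field_simps)
  qed
  define v where "v i = w (inv_into {..<n} \<sigma> i)" for i
  have vs: "v (\<sigma> k) = w k" if "k < n" for k
    unfolding v_def using inj that by (simp add: inv_into_f_f)
  show ?thesis
  proof (rule not_adm_crit[where v = v])
    show "\<forall>i<n. v i > 0"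
    proof (intro allI impI)
      fix i assume "i < n"
      then have "inv_into {..<n} \<sigma> i < n" using bij
        by (metis bij_betw_def inv_into_into lessThan_iff)
      then show "v i > 0" unfolding v_def using wpos by simp
    qed
    show "\<forall>i<n. (\<Sum>j<n. M i j * v j) \<le> 0"
    proof (intro allI impI)
      fix i assume i: "i < n"
      define p where "p = inv_into {..<n} \<sigma> i"
      have p: "p < n" "\<sigma> p = i" unfolding p_def using bij i
        by (metis bij_betw_def inv_into_into lessThan_iff, metis bij_betw_def f_inv_into_f i lessThan_iff)
      define q where "q = Suc p mod n"
      define pd where "pd = (if p = 0 then n - 1 else p - 1)"
      have q: "q < n" unfolding q_def using p by simp
      have pd: "pd < n" "Suc pd mod n = p" unfolding pd_def using p n3 by auto
      have dist: "q \<noteq> p" "pd \<noteq> p" "pd \<noteq> q" unfolding q_def pd_def using p n3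
        by (auto simp: mod_Suc)
      have "(\<Sum>j<n. M i j * v j) = (\<Sum>k<n. M i (\<sigma> k) * v (\<sigma> k))"
        using sum.reindex_bij_betw[OF bij, of "\<lambda>j. M i j * v j"] by simp
      also have "\<dots> = (\<Sum>k<n. M (\<sigma> p) (\<sigma> k) * w k)"
        using vs p by simp
      also have "\<dots> = (\<Sum>k\<in>{p,q,pd}. M (\<sigma> p) (\<sigma> k) * w k)"
      proof (rule sum.mono_neutral_right)
        show "finite {..<n}" by simp
        show "{p,q,pd} \<subseteq> {..<n}" using p q pd by auto
        show "\<forall>k\<in>{..<n} - {p, q, pd}. M (\<sigma> p) (\<sigma> k) * w k = 0"
        proof
          fix k assume k: "k \<in> {..<n} - {p, q, pd}"
          have k1: "k < n" "k \<noteq> p" "k \<noteq> q" "k \<noteq> pd" using k by auto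
          have "\<not> (k = Suc p mod n \<or> p = Suc k mod n)"
            using k1 p unfolding q_def pd_def by (auto simp: mod_Suc split: if_splits)
          then have "\<not> egcm_adj n M (\<sigma> p) (\<sigma> k)" using adj p k1 by blast
          moreover have "\<sigma> p \<noteq> \<sigma> k" using inj p k1 by (metis inj_on_def lessThan_iff)
          ultimately have "M (\<sigma> p) (\<sigma> k) = 0" using sig p k1 unfolding egcm_adj_def by auto
          then show "M (\<sigma> p) (\<sigma> k) * w k = 0" by simp
        qed
      qed
      also have "\<dots> = M (\<sigma> p) (\<sigma> p) * w p + M (\<sigma> p) (\<sigma> q) * w q + M (\<sigma> p) (\<sigma> pd) * w pd"
        using dist by (simp add: algebra_simps)
      also have "\<dots> = 2 * w p - c p * w q - w pd / c pd"
        using diag[OF i] sig p edge[OF pd(1)] pd unfolding c_def q_def by (simp add: field_simps)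
      also have "\<dots> = 2 * w p - r * w p - w p / r"
      proof -
        have "c p * w q = r * w p" using rel[OF p(1)] unfolding q_def by (simp add: mult.commute)
        moreover have "w pd / c pd = w p / r" using rel[OF pd(1)] pd edge[OF pd(1)] rpos
          by (simp add: field_simps)
        ultimately show ?thesis by simp
      qed
      also have "\<dots> = - w p * (r - 1)^2 / r" using rpos by (simp add: field_simps power2_eq_square)
      also have "\<dots> \<le> 0" using rpos wpos[of p] p by (simp add: divide_nonpos_pos)
      finally show "(\<Sum>j<n. M i j * v j) \<le> 0" .
    qed
  qed
qed

end
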